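(* Let $a,b,\alpha,\beta$ be constants with $\alpha>0$, $\beta>0$, $\alpha\neq\beta$, $a^2\alpha^2+b^2\beta^2=1$, and let $c(v)=(a\cos\alpha v,\ a\sin\alpha v,\ b\cos\beta v,\ b\sin\beta v)$, $v\in[0,2\pi)$ (an arc-length parameterized curve in $\mathbb R^4$ with constant curvatures). Put $$\varkappa=\sqrt{a^2\alpha^4+b^2\beta^4},\qquad \tau=\frac{ab\alpha\beta(\alpha^2-\beta^2)}{\varkappa},\qquad \sigma=\frac{\alpha\beta}{\varkappa},$$ $$n(v)=\tfrac1\varkappa(-a\alpha^2\cos\alpha v,-a\alpha^2\sin\alpha v,-b\beta^2\cos\beta v,-b\beta^2\sin\beta v),\quad b_1(v)=\tfrac1\varkappa(b\beta^2\cos\alpha v,b\beta^2\sin\alpha v,-a\alpha^2\cos\beta v,-a\alpha^2\sin\beta v)$$ (the second and fourth Frenet vectors of $c$). Let $A(u),B(u)$ be smooth functions on an interval $J$ with $A'^2+B'^2>0$ and $(\varkappa A-1)^2+(\tau A-\sigma B)^2>0$ on $J$, and consider the surface $$M^2: z(u,v)=c(v)+A(u)\,n(v)+B(u)\,b_1(v),\qquad u\in J,\ v\in[0,2\pi).$$ Then $M^2$ is minimal if and only if, on $J$, $$\frac{A''B'-A'B''}{A'^2+B'^2}=\frac{(\varkappa A-1)\varkappa B'+(\tau A-\sigma B)(\sigma A'+\tau B')}{(\varkappa A-1)^2+(\tau A-\sigma B)^2}.$$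
   Context: Minimal means that the mean curvature vector $H=\tfrac12(\sigma_{II}(x,x)+\sigma_{II}(y,y))$ vanishes, where $\sigma_{II}$ is the second fundamental form of the surface in $\mathbb R^4$ (with its standard Euclidean metric) and $x,y$ is an orthonormal tangent basis. *)

theory Defs
  imports "HOL-Analysis.Analysis"
begin

type_synonym surf = "real \<times> real \<Rightarrow> real^4"

definition zu :: "surf \<Rightarrow> real \<times> real \<Rightarrow> real^4" where
  "zu z p = vector_derivative (\<lambda>s. z (s, snd p)) (at (fst p))"

definition zv :: "surf \<Rightarrow> real \<times> real \<Rightarrow> real^4" where
  "zv z p = vector_derivative (\<lambda>t. z (fst p, t)) (at (snd p))"

definition zuu :: "surf \<Rightarrow> real \<times> real \<Rightarrow> real^4" where
  "zuu z p = vector_derivative (\<lambda>s. zu z (s, snd p)) (at (fst p))"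

definition zuv :: "surf \<Rightarrow> real \<times> real \<Rightarrow> real^4" where
  "zuv z p = vector_derivative (\<lambda>t. zu z (fst p, t)) (at (snd p))"

definition zvv :: "surf \<Rightarrow> real \<times> real \<Rightarrow> real^4" where
  "zvv z p = vector_derivative (\<lambda>t. zv z (fst p, t)) (at (snd p))"

definition gE :: "surf \<Rightarrow> real \<times> real \<Rightarrow> real" where "gE z p = zu z p \<bullet> zu z p"
definition gF :: "surf \<Rightarrow> real \<times> real \<Rightarrow> real" where "gF z p = zu z p \<bullet> zv z p"
definition gG :: "surf \<Rightarrow> real \<times> real \<Rightarrow> real" where "gG z p = zv z p \<bullet> zv z p"

text \<open>Orthogonal projection onto the normal plane (complement of span of zu, zv).\<close>
definition normal_part :: "surf \<Rightarrow> real \<times> real \<Rightarrow> real^4 \<Rightarrow> real^4" where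
  "normal_part z p w =
     (let E = gE z p; F = gF z p; G = gG z p; D = E * G - F\<^sup>2;
          a = w \<bullet> zu z p; b = w \<bullet> zv z p
      in w - ((G * a - F * b) / D) *\<^sub>R zu z p - ((E * b - F * a) / D) *\<^sub>R zv z p)"

text \<open>Mean curvature vector H = 1/2 trace of the second fundamental form
  w.r.t. the induced metric, i.e. 1/2 g^{ij} sigma(d_i, d_j).\<close>
definition mean_curvature_vector :: "surf \<Rightarrow> real \<times> real \<Rightarrow> real^4" where
  "mean_curvature_vector z p =
     (let E = gE z p; F = gF z p; G = gG z p; D = E * G - F\<^sup>2
      in (1 / (2 * D)) *\<^sub>R
           (G *\<^sub>R normal_part z p (zuu z p) - (2 * F) *\<^sub>R normal_part z p (zuv z p)
            + E *\<^sub>R normal_part z p (zvv z p)))"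

definition minimal_on :: "surf \<Rightarrow> (real \<times> real) set \<Rightarrow> bool" where
  "minimal_on z U \<longleftrightarrow> (\<forall>p\<in>U. mean_curvature_vector z p = 0)"

definition kap :: "real \<Rightarrow> real \<Rightarrow> real \<Rightarrow> real \<Rightarrow> real" where
  "kap a b \<alpha> \<beta> = sqrt (a\<^sup>2 * \<alpha>^4 + b\<^sup>2 * \<beta>^4)"

definition tau :: "real \<Rightarrow> real \<Rightarrow> real \<Rightarrow> real \<Rightarrow> real" where
  "tau a b \<alpha> \<beta> = a * b * \<alpha> * \<beta> * (\<alpha>\<^sup>2 - \<beta>\<^sup>2) / kap a b \<alpha> \<beta>"

definition sig :: "real \<Rightarrow> real \<Rightarrow> real \<Rightarrow> real \<Rightarrow> real" where
  "sig a b \<alpha> \<beta> = \<alpha> * \<beta> / kap a b \<alpha> \<beta>"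

definition curve_c :: "real \<Rightarrow> real \<Rightarrow> real \<Rightarrow> real \<Rightarrow> real \<Rightarrow> real^4" where
  "curve_c a b \<alpha> \<beta> v = vector [a * cos (\<alpha> * v), a * sin (\<alpha> * v), b * cos (\<beta> * v), b * sin (\<beta> * v)]"

definition frame_n :: "real \<Rightarrow> real \<Rightarrow> real \<Rightarrow> real \<Rightarrow> real \<Rightarrow> real^4" where
  "frame_n a b \<alpha> \<beta> v = (1 / kap a b \<alpha> \<beta>) *\<^sub>R
     vector [- a * \<alpha>\<^sup>2 * cos (\<alpha> * v), - a * \<alpha>\<^sup>2 * sin (\<alpha> * v),
             - b * \<beta>\<^sup>2 * cos (\<beta> * v), - b * \<beta>\<^sup>2 * sin (\<beta> * v)]"

definition frame_b1 :: "real \<Rightarrow> real \<Rightarrow> real \<Rightarrow> real \<Rightarrow> real \<Rightarrow> real^4" where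
  "frame_b1 a b \<alpha> \<beta> v = (1 / kap a b \<alpha> \<beta>) *\<^sub>R
     vector [b * \<beta>\<^sup>2 * cos (\<alpha> * v), b * \<beta>\<^sup>2 * sin (\<alpha> * v),
             - a * \<alpha>\<^sup>2 * cos (\<beta> * v), - a * \<alpha>\<^sup>2 * sin (\<beta> * v)]"

definition surface_z :: "real \<Rightarrow> real \<Rightarrow> real \<Rightarrow> real \<Rightarrow> (real \<Rightarrow> real) \<Rightarrow> (real \<Rightarrow> real) \<Rightarrow> surf" where
  "surface_z a b \<alpha> \<beta> A B p =
     curve_c a b \<alpha> \<beta> (snd p) + A (fst p) *\<^sub>R frame_n a b \<alpha> \<beta> (snd p)
       + B (fst p) *\<^sub>R frame_b1 a b \<alpha> \<beta> (snd p)"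

end

theory Submission imports Defs begin

definition E1 :: "real \<Rightarrow> real \<Rightarrow> real^4" where "E1 al v = cos (al * v) *\<^sub>R axis 1 1 + sin (al * v) *\<^sub>R axis 2 1"
definition F1 :: "real \<Rightarrow> real \<Rightarrow> real^4" where "F1 al v = (- sin (al * v)) *\<^sub>R axis 1 1 + cos (al * v) *\<^sub>R axis 2 1"
definition E2 :: "real \<Rightarrow> real \<Rightarrow> real^4" where "E2 al v = cos (al * v) *\<^sub>R axis 3 1 + sin (al * v) *\<^sub>R axis 4 1"
definition F2 :: "real \<Rightarrow> real \<Rightarrow> real^4" where "F2 al v = (- sin (al * v)) *\<^sub>R axis 3 1 + cos (al * v) *\<^sub>R axis 4 1"

lemma vector_4:
 "(vector [x,y,z,w] ::('a::zero)^4)$1 = x"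
 "(vector [x,y,z,w] ::('a::zero)^4)$2 = y"
 "(vector [x,y,z,w] ::('a::zero)^4)$3 = z"
 "(vector [x,y,z,w] ::('a::zero)^4)$4 = w"
  unfolding vector_def by simp_all

lemma ax: "(1::4) \<noteq> 2" "(1::4) \<noteq> 3" "(1::4) \<noteq> 4" "(2::4) \<noteq> 3" "(2::4) \<noteq> 4" "(3::4) \<noteq> 4"
  by simp_all

lemma orth:
  "E1 a v \<bullet> E1 a v = 1" "F1 a v \<bullet> F1 a v = 1" "E2 b v \<bullet> E2 b v = 1" "F2 b v \<bullet> F2 b v = 1"
  "E1 a v \<bullet> F1 a v = 0" "E1 a v \<bullet> E2 b v = 0" "E1 a v \<bullet> F2 b v = 0"
  "F1 a v \<bullet> E2 b v = 0" "F1 a v \<bullet> F2 b v = 0" "E2 b v \<bullet> F2 b v = 0"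
  by (simp_all add: E1_def F1_def E2_def F2_def inner_add_left inner_add_right inner_diff_left inner_diff_right inner_axis_axis ax
      ax[symmetric] power2_eq_square[symmetric])

lemma dE1: "((E1 a) has_vector_derivative (a *\<^sub>R F1 a v)) (at v)"
  unfolding E1_def F1_def
  by (auto intro!: derivative_eq_intros simp: algebra_simps)
lemma dF1: "((F1 a) has_vector_derivative (- a *\<^sub>R E1 a v)) (at v)"
  unfolding E1_def F1_def
  by (auto intro!: derivative_eq_intros simp: algebra_simps)
lemma dE2: "((E2 a) has_vector_derivative (a *\<^sub>R F2 a v)) (at v)"
  unfolding E2_def F2_def
  by (auto intro!: derivative_eq_intros simp: algebra_simps)
lemma dF2: "((F2 a) has_vector_derivative (- a *\<^sub>R E2 a v)) (at v)"
  unfolding E2_def F2_def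
  by (auto intro!: derivative_eq_intros simp: algebra_simps)

lemma curve_eq: "curve_c a b al be v = a *\<^sub>R E1 al v + b *\<^sub>R E2 be v"
  by (simp add: curve_c_def E1_def E2_def vec_eq_iff forall_4 vector_4 axis_def)

lemma n_eq: "frame_n a b al be v = (- a*al^2 / kap a b al be) *\<^sub>R E1 al v + (- b*be^2 / kap a b al be) *\<^sub>R E2 be v"
  by (simp add: frame_n_def E1_def E2_def vec_eq_iff forall_4 vector_4 axis_def)

lemma b1_eq: "frame_b1 a b al be v = (b*be^2 / kap a b al be) *\<^sub>R E1 al v + (- a*al^2 / kap a b al be) *\<^sub>R E2 be v"
  by (simp add: frame_b1_def E1_def E2_def vec_eq_iff forall_4 vector_4 axis_def)

lemma key:
  fixes ea eb fa fb :: "real^4"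
  assumes o: "ea \<bullet> ea = 1" "fa \<bullet> fa = 1" "eb \<bullet> eb = 1" "fb \<bullet> fb = 1"
  "ea \<bullet> fa = 0" "ea \<bullet> eb = 0" "ea \<bullet> fb = 0"
  "fa \<bullet> eb = 0" "fa \<bullet> fb = 0" "eb \<bullet> fb = 0"
  and hu: "zu z p = x1 *\<^sub>R ea + x2 *\<^sub>R eb"
  and hv: "zv z p = y1 *\<^sub>R fa + y2 *\<^sub>R fb"
  and huu: "zuu z p = w1 *\<^sub>R ea + w2 *\<^sub>R eb"
  and hvv: "zvv z p = r1 *\<^sub>R ea + r2 *\<^sub>R eb"
  and Ep: "x1^2 + x2^2 > 0" and Gp: "y1^2 + y2^2 > 0"
  shows "mean_curvature_vector z p = 0 \<longleftrightarrow>
     (y1^2+y2^2) * (x1*w2 - x2*w1) + (x1^2+x2^2) * (x1*r2 - x2*r1) = 0"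
proof -
  have o': "fa \<bullet> ea = 0" "eb \<bullet> ea = 0" "fb \<bullet> ea = 0" "eb \<bullet> fa = 0" "fb \<bullet> fa = 0" "fb \<bullet> eb = 0"
    using o by (simp_all add: inner_commute)
  note ip = inner_add_left inner_add_right inner_scaleR_left inner_scaleR_right o o'
  define E where "E = x1^2 + x2^2"
  define G where "G = y1^2 + y2^2"
  have gE: "gE z p = E" by (simp add: gE_def hu ip E_def power2_eq_square)
  have gG: "gG z p = G" by (simp add: gG_def hv ip G_def power2_eq_square)
  have gF: "gF z p = 0" by (simp add: gF_def hu hv ip)
  have E0: "E > 0" "G > 0" using Ep Gp E_def G_def by auto
  define s1 where "s1 = G*w1 + E*r1"
  define s2 where "s2 = G*w2 + E*r2"
  define k where "k = (s1*x1 + s2*x2)/E"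
  have H: "mean_curvature_vector z p = (1/(2*E*G)) *\<^sub>R ((s1 - k*x1) *\<^sub>R ea + (s2 - k*x2) *\<^sub>R eb)"
  proof -
    have 1: "normal_part z p (zuu z p) = (w1 - (w1*x1+w2*x2)/E*x1) *\<^sub>R ea + (w2 - (w1*x1+w2*x2)/E*x2) *\<^sub>R eb"
      using E0 apply (simp add: normal_part_def gE gG gF Let_def huu hu hv ip algebra_simps)
      apply (intro arg_cong2[where f="(+)"] arg_cong2[where f="scaleR"] refl)
       apply (simp_all add: field_simps)
      done
    have 2: "normal_part z p (zvv z p) = (r1 - (r1*x1+r2*x2)/E*x1) *\<^sub>R ea + (r2 - (r1*x1+r2*x2)/E*x2) *\<^sub>R eb"
      using E0 apply (simp add: normal_part_def gE gG gF Let_def hvv hu hv ip algebra_simps)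
      apply (intro arg_cong2[where f="(+)"] arg_cong2[where f="scaleR"] refl)
       apply (simp_all add: field_simps)
      done
    have 3: "mean_curvature_vector z p = (1/(2*E*G)) *\<^sub>R (G *\<^sub>R normal_part z p (zuu z p) + E *\<^sub>R normal_part z p (zvv z p))"
      by (simp add: mean_curvature_vector_def Let_def gE gG gF)
    have 4: "\<And>a b c d. G *\<^sub>R (a *\<^sub>R ea + b *\<^sub>R eb) + E *\<^sub>R (c *\<^sub>R ea + d *\<^sub>R eb) = (G*a + E*c) *\<^sub>R ea + (G*b+E*d) *\<^sub>R eb"
      by (simp add: algebra_simps)
    have 5: "G*(w1 - (w1*x1+w2*x2)/E*x1) + E*(r1 - (r1*x1+r2*x2)/E*x1) = s1 - k*x1"
            "G*(w2 - (w1*x1+w2*x2)/E*x2) + E*(r2 - (r1*x1+r2*x2)/E*x2) = s2 - k*x2"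
      using E0 by (simp_all add: s1_def s2_def k_def field_simps)
    show ?thesis unfolding 3 1 2 4 5 ..
  qed
  have "mean_curvature_vector z p = 0 \<longleftrightarrow> (s1 - k*x1 = 0 \<and> s2 - k*x2 = 0)"
  proof
    assume h: "mean_curvature_vector z p = 0"
    hence "(s1 - k*x1) *\<^sub>R ea + (s2 - k*x2) *\<^sub>R eb = 0" using H E0 by simp
    hence "((s1 - k*x1) *\<^sub>R ea + (s2 - k*x2) *\<^sub>R eb) \<bullet> ea = 0"
      "((s1 - k*x1) *\<^sub>R ea + (s2 - k*x2) *\<^sub>R eb) \<bullet> eb = 0" by simp_all
    thus "s1 - k*x1 = 0 \<and> s2 - k*x2 = 0" by (simp add: ip)
  qed (simp add: H)
  also have "\<dots> \<longleftrightarrow> s1*x2 - s2*x1 = 0"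
  proof
    assume "s1 - k*x1 = 0 \<and> s2 - k*x2 = 0"
    thus "s1*x2 - s2*x1 = 0" by (auto simp: algebra_simps)
  next
    assume c: "s1*x2 - s2*x1 = 0"
    have kE: "k*E = s1*x1+s2*x2" using E0 by (simp add: k_def)
    have "(s1 - k*x1)*E = s1*E - (k*E)*x1" "(s2 - k*x2)*E = s2*E - (k*E)*x2"
      by (simp_all add: algebra_simps)
    hence "(s1 - k*x1)*E = x2*(s1*x2 - s2*x1)" "(s2 - k*x2)*E = - x1*(s1*x2 - s2*x1)"
      unfolding kE by (simp_all add: E_def power2_eq_square algebra_simps)
    hence "(s1 - k*x1)*E = 0" "(s2 - k*x2)*E = 0" using c by simp_all
    thus "s1 - k*x1 = 0 \<and> s2 - k*x2 = 0" using E0 by simp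
  qed
  also have "\<dots> \<longleftrightarrow> G * (x1*w2 - x2*w1) + E * (x1*r2 - x2*r1) = 0"
    by (auto simp add: s1_def s2_def algebra_simps)
  finally show ?thesis by (simp add: E_def G_def)
qed

lemma alg:
  fixes a b al be K A B Ad Bd Add Bdd :: real
  assumes K: "K > 0" "K^2 = a^2*al^4 + b^2*be^4" and c: "a^2*al^2 + b^2*be^2 = 1"
  defines "k1 \<equiv> - a*al^2/K" and "k2 \<equiv> - b*be^2/K" and "m1 \<equiv> b*be^2/K" and "m2 \<equiv> - a*al^2/K"
  defines "P \<equiv> a + A*k1 + B*m1" and "Q \<equiv> b + A*k2 + B*m2"
  defines "x1 \<equiv> Ad*k1 + Bd*m1" and "x2 \<equiv> Ad*k2 + Bd*m2"
  defines "w1 \<equiv> Add*k1 + Bdd*m1" and "w2 \<equiv> Add*k2 + Bdd*m2"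
  defines "ta \<equiv> a*b*al*be*(al^2-be^2)/K" and "si \<equiv> al*be/K"
  shows "(al*P)^2 + (be*Q)^2 = (K*A - 1)^2 + (ta*A - si*B)^2"
    and "x1^2 + x2^2 = Ad^2 + Bd^2"
    and "x1*w2 - x2*w1 = Ad*Bdd - Add*Bd"
    and "x1*(-(be^2)*Q) - x2*(-(al^2)*P) = (K*A-1)*K*Bd + (ta*A - si*B)*(si*Ad + ta*Bd)"
proof -
  have K0: "K \<noteq> 0" using K by simp
  have kk: "k1^2 + k2^2 = 1" "m1^2+m2^2 = 1" "k1*m1 + k2*m2 = 0" "k1*m2 - k2*m1 = 1"
  proof -
    have p4: "\<And>x::real. x^4 = x*x*(x*x)" by (simp add: eval_nat_numeral)
    have Kne: "a^2*al^4 + b^2*be^4 \<noteq> 0" using K by auto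
    have "k1^2 + k2^2 = (a^2*al^4 + b^2*be^4)/K^2" "m1^2 + m2^2 = (a^2*al^4 + b^2*be^4)/K^2"
      "k1*m2 - k2*m1 = (a^2*al^4 + b^2*be^4)/K^2"
      by (simp_all add: k1_def k2_def m1_def m2_def power_divide power_mult_distrib add_divide_distrib diff_divide_distrib power2_eq_square p4 mult_ac)
    moreover have "k1*m1 + k2*m2 = 0" by (simp add: k1_def k2_def m1_def m2_def algebra_simps)
    ultimately show "k1^2 + k2^2 = 1" "m1^2+m2^2 = 1" "k1*m1 + k2*m2 = 0" "k1*m2 - k2*m1 = 1"
      using K Kne by simp_all
  qed
  show "x1^2 + x2^2 = Ad^2 + Bd^2"
  proof -
    have "x1^2 + x2^2 = Ad^2*(k1^2+k2^2) + Bd^2*(m1^2+m2^2) + 2*Ad*Bd*(k1*m1+k2*m2)"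
      by (simp add: x1_def x2_def power2_eq_square algebra_simps)
    thus ?thesis using kk by simp
  qed
  show "x1*w2 - x2*w1 = Ad*Bdd - Add*Bd"
  proof -
    have "x1*w2 - x2*w1 = (Ad*Bdd - Add*Bd)*(k1*m2 - k2*m1)"
      by (simp add: x1_def x2_def w1_def w2_def algebra_simps)
    thus ?thesis using kk by simp
  qed
  show "(al*P)^2 + (be*Q)^2 = (K*A - 1)^2 + (ta*A - si*B)^2"
  proof -
    have "K^2*((al*P)^2 + (be*Q)^2) = al^2*(a*K - A*a*al^2 + B*b*be^2)^2 + be^2*(b*K - A*b*be^2 - B*a*al^2)^2"
      using K0 by (simp add: P_def Q_def k1_def k2_def m1_def m2_def field_simps power2_eq_square)
    moreover have "K^2*((K*A - 1)^2 + (ta*A - si*B)^2) = K^2*(K*A-1)^2 + (a*b*al*be*(al^2-be^2)*A - al*be*B)^2"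
      using K0 by (simp add: ta_def si_def field_simps power2_eq_square)
    moreover have "al^2*(a*K - A*a*al^2 + B*b*be^2)^2 + be^2*(b*K - A*b*be^2 - B*a*al^2)^2
        = K^2*(K*A-1)^2 + (a*b*al*be*(al^2-be^2)*A - al*be*B)^2"
      using K(2) c by algebra
    ultimately show ?thesis using K0 by (metis mult_left_cancel power_not_zero)
  qed
  show "x1*(-(be^2)*Q) - x2*(-(al^2)*P) = (K*A-1)*K*Bd + (ta*A - si*B)*(si*Ad + ta*Bd)"
  proof -
    have "K^2*(x1*(-(be^2)*Q) - x2*(-(al^2)*P)) = (Ad*(- a*al^2) + Bd*b*be^2)*(-(be^2))*(b*K - A*b*be^2 - B*a*al^2)
         + (Ad*(- b*be^2) - Bd*a*al^2)*al^2*(a*K - A*a*al^2 + B*b*be^2)"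
      using K0 by (simp add: P_def Q_def x1_def x2_def k1_def k2_def m1_def m2_def field_simps power2_eq_square)
    moreover have "K^2*((K*A-1)*K*Bd + (ta*A - si*B)*(si*Ad + ta*Bd)) = K^2*(K*A-1)*K*Bd + (a*b*al*be*(al^2-be^2)*A - al*be*B)*(al*be*Ad + a*b*al*be*(al^2-be^2)*Bd)"
      using K0 by (simp add: ta_def si_def field_simps power2_eq_square)
    moreover have "(Ad*(- a*al^2) + Bd*b*be^2)*(-(be^2))*(b*K - A*b*be^2 - B*a*al^2)
         + (Ad*(- b*be^2) - Bd*a*al^2)*al^2*(a*K - A*a*al^2 + B*b*be^2)
       = K^2*(K*A-1)*K*Bd + (a*b*al*be*(al^2-be^2)*A - al*be*B)*(al*be*Ad + a*b*al*be*(al^2-be^2)*Bd)"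
      using K(2) c by algebra
    ultimately show ?thesis using K0 by (metis mult_left_cancel power_not_zero)
  qed
qed

theorem proposition7p6:
  fixes a b \<alpha> \<beta> :: real and A B :: "real \<Rightarrow> real" and J :: "real set"
  assumes "\<alpha> > 0" and "\<beta> > 0" and "\<alpha> \<noteq> \<beta>"
    and "a\<^sup>2 * \<alpha>\<^sup>2 + b\<^sup>2 * \<beta>\<^sup>2 = 1"
    and "open J" and "is_interval J"
    and "\<And>k x. x \<in> J \<Longrightarrow> ((deriv ^^ k) A) differentiable (at x)"
    and "\<And>k x. x \<in> J \<Longrightarrow> ((deriv ^^ k) B) differentiable (at x)"
    and "\<And>u. u \<in> J \<Longrightarrow> (deriv A u)\<^sup>2 + (deriv B u)\<^sup>2 > 0"
    and "\<And>u. u \<in> J \<Longrightarrow>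
           (kap a b \<alpha> \<beta> * A u - 1)\<^sup>2 + (tau a b \<alpha> \<beta> * A u - sig a b \<alpha> \<beta> * B u)\<^sup>2 > 0"
  shows "minimal_on (surface_z a b \<alpha> \<beta> A B) (J \<times> {0..<2 * pi}) \<longleftrightarrow>
    (\<forall>u\<in>J.
      (deriv (deriv A) u * deriv B u - deriv A u * deriv (deriv B) u)
        / ((deriv A u)\<^sup>2 + (deriv B u)\<^sup>2)
      = ((kap a b \<alpha> \<beta> * A u - 1) * kap a b \<alpha> \<beta> * deriv B u
          + (tau a b \<alpha> \<beta> * A u - sig a b \<alpha> \<beta> * B u)
            * (sig a b \<alpha> \<beta> * deriv A u + tau a b \<alpha> \<beta> * deriv B u))
        / ((kap a b \<alpha> \<beta> * A u - 1)\<^sup>2 + (tau a b \<alpha> \<beta> * A u - sig a b \<alpha> \<beta> * B u)\<^sup>2))"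
proof -
  note assms
  define K where "K = kap a b \<alpha> \<beta>"
  have Kpos': "a^2*\<alpha>^4 + b^2*\<beta>^4 > 0"
  proof -
    have "a \<noteq> 0 \<or> b \<noteq> 0" using assms(4) by auto
    thus ?thesis using assms(1,2) by (auto intro: add_pos_nonneg add_nonneg_pos)
  qed
  have K2: "K^2 = a^2*\<alpha>^4 + b^2*\<beta>^4" using Kpos' by (simp add: K_def kap_def)
  have Kp: "K > 0" using Kpos' by (simp add: K_def kap_def)
  define k1 where "k1 = - a*\<alpha>^2/K"
  define k2 where "k2 = - b*\<beta>^2/K"
  define m1 where "m1 = b*\<beta>^2/K"
  define m2 where "m2 = - a*\<alpha>^2/K"
  define z where "z = surface_z a b \<alpha> \<beta> A B"
  have zeq: "z (s,t) = (a + A s*k1 + B s*m1) *\<^sub>R E1 \<alpha> t + (b + A s*k2 + B s*m2) *\<^sub>R E2 \<beta> t" for s t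
    unfolding z_def surface_z_def curve_eq n_eq b1_eq K_def[symmetric] k1_def k2_def m1_def m2_def
    by (simp add: algebra_simps)
  have dA: "(A has_real_derivative deriv A u) (at u)" "(B has_real_derivative deriv B u) (at u)"
    "(deriv A has_real_derivative deriv (deriv A) u) (at u)" "(deriv B has_real_derivative deriv (deriv B) u) (at u)"
    if "u \<in> J" for u
    using assms(7)[of u 0] assms(8)[of u 0] assms(7)[of u 1] assms(8)[of u 1] that
    by (simp_all add: DERIV_deriv_iff_real_differentiable)
  have zu: "zu z (u,v) = (deriv A u*k1 + deriv B u*m1) *\<^sub>R E1 \<alpha> v + (deriv A u*k2 + deriv B u*m2) *\<^sub>R E2 \<beta> v"
    if "u \<in> J" for u v
  proof -
    have "((\<lambda>s. z (s,v)) has_vector_derivative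
      ((deriv A u*k1 + deriv B u*m1) *\<^sub>R E1 \<alpha> v + (deriv A u*k2 + deriv B u*m2) *\<^sub>R E2 \<beta> v)) (at u)"
      unfolding zeq using dA[OF that]
      by (auto intro!: derivative_eq_intros)
    thus ?thesis by (simp add: zu_def vector_derivative_at)
  qed
  have zuu: "zuu z (u,v) = (deriv (deriv A) u*k1 + deriv (deriv B) u*m1) *\<^sub>R E1 \<alpha> v
      + (deriv (deriv A) u*k2 + deriv (deriv B) u*m2) *\<^sub>R E2 \<beta> v"
    if "u \<in> J" for u v
  proof -
    have "((\<lambda>s. (deriv A s*k1 + deriv B s*m1) *\<^sub>R E1 \<alpha> v + (deriv A s*k2 + deriv B s*m2) *\<^sub>R E2 \<beta> v) has_vector_derivative
      ((deriv (deriv A) u*k1 + deriv (deriv B) u*m1) *\<^sub>R E1 \<alpha> v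
      + (deriv (deriv A) u*k2 + deriv (deriv B) u*m2) *\<^sub>R E2 \<beta> v)) (at u)"
      using dA[OF that]
      by (auto intro!: derivative_eq_intros)
    hence "((\<lambda>s. zu z (s,v)) has_vector_derivative
      ((deriv (deriv A) u*k1 + deriv (deriv B) u*m1) *\<^sub>R E1 \<alpha> v
      + (deriv (deriv A) u*k2 + deriv (deriv B) u*m2) *\<^sub>R E2 \<beta> v)) (at u)"
      by (rule has_vector_derivative_transform_within_open[OF _ assms(5) that]) (simp add: zu)
    thus ?thesis by (simp add: zuu_def vector_derivative_at)
  qed
  have zv: "zv z (u,v) = (\<alpha>*(a + A u*k1 + B u*m1)) *\<^sub>R F1 \<alpha> v + (\<beta>*(b + A u*k2 + B u*m2)) *\<^sub>R F2 \<beta> v" for u v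
  proof -
    have "((\<lambda>t. z (u,t)) has_vector_derivative
      ((\<alpha>*(a + A u*k1 + B u*m1)) *\<^sub>R F1 \<alpha> v + (\<beta>*(b + A u*k2 + B u*m2)) *\<^sub>R F2 \<beta> v)) (at v)"
      unfolding zeq
      by (auto intro!: derivative_eq_intros dE1 dE2 simp: mult.commute)
    thus ?thesis by (simp add: zv_def vector_derivative_at)
  qed
  have zvv: "zvv z (u,v) = (-(\<alpha>^2)*(a + A u*k1 + B u*m1)) *\<^sub>R E1 \<alpha> v + (-(\<beta>^2)*(b + A u*k2 + B u*m2)) *\<^sub>R E2 \<beta> v" for u v
  proof -
    have "((\<lambda>t. zv z (u,t)) has_vector_derivative
      ((-(\<alpha>^2)*(a + A u*k1 + B u*m1)) *\<^sub>R E1 \<alpha> v + (-(\<beta>^2)*(b + A u*k2 + B u*m2)) *\<^sub>R E2 \<beta> v)) (at v)"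
      unfolding zv
      by (auto intro!: derivative_eq_intros dF1 dF2 simp: power2_eq_square algebra_simps)
    thus ?thesis by (simp add: zvv_def vector_derivative_at)
  qed
  have pt: "mean_curvature_vector z (u,v) = 0 \<longleftrightarrow>
      (deriv (deriv A) u * deriv B u - deriv A u * deriv (deriv B) u)
        / ((deriv A u)\<^sup>2 + (deriv B u)\<^sup>2)
      = ((kap a b \<alpha> \<beta> * A u - 1) * kap a b \<alpha> \<beta> * deriv B u
          + (tau a b \<alpha> \<beta> * A u - sig a b \<alpha> \<beta> * B u)
            * (sig a b \<alpha> \<beta> * deriv A u + tau a b \<alpha> \<beta> * deriv B u))
        / ((kap a b \<alpha> \<beta> * A u - 1)\<^sup>2 + (tau a b \<alpha> \<beta> * A u - sig a b \<alpha> \<beta> * B u)\<^sup>2)"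
    if u: "u \<in> J" for u v
  proof -
    define x1 where "x1 = deriv A u*k1 + deriv B u*m1"
    define x2 where "x2 = deriv A u*k2 + deriv B u*m2"
    define w1 where "w1 = deriv (deriv A) u*k1 + deriv (deriv B) u*m1"
    define w2 where "w2 = deriv (deriv A) u*k2 + deriv (deriv B) u*m2"
    define P where "P = a + A u*k1 + B u*m1"
    define Q where "Q = b + A u*k2 + B u*m2"
    define Den where "Den = (kap a b \<alpha> \<beta> * A u - 1)\<^sup>2 + (tau a b \<alpha> \<beta> * A u - sig a b \<alpha> \<beta> * B u)\<^sup>2"
    define Num where "Num = (kap a b \<alpha> \<beta> * A u - 1) * kap a b \<alpha> \<beta> * deriv B u
          + (tau a b \<alpha> \<beta> * A u - sig a b \<alpha> \<beta> * B u)
            * (sig a b \<alpha> \<beta> * deriv A u + tau a b \<alpha> \<beta> * deriv B u)"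
    define E where "E = (deriv A u)\<^sup>2 + (deriv B u)\<^sup>2"
    note al = alg[OF Kp K2 assms(4)]
    have G: "(\<alpha>*P)^2 + (\<beta>*Q)^2 = Den"
      using al(1) unfolding Den_def P_def Q_def k1_def k2_def m1_def m2_def K_def tau_def sig_def .
    have Ee: "x1^2 + x2^2 = E"
      using al(2) unfolding E_def x1_def x2_def k1_def k2_def m1_def m2_def K_def .
    have W: "x1*w2 - x2*w1 = deriv A u * deriv (deriv B) u - deriv (deriv A) u * deriv B u"
      using al(3) unfolding w1_def w2_def x1_def x2_def k1_def k2_def m1_def m2_def K_def .
    have N: "x1*(-(\<beta>^2)*Q) - x2*(-(\<alpha>^2)*P) = Num"
      using al(4) unfolding Num_def P_def Q_def x1_def x2_def k1_def k2_def m1_def m2_def K_def tau_def sig_def .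
    have Dp: "Den > 0" using assms(10)[OF u] by (simp add: Den_def)
    have Ep: "E > 0" using assms(9)[OF u] by (simp add: E_def)
    have "mean_curvature_vector z (u,v) = 0 \<longleftrightarrow>
       ((\<alpha>*P)^2 + (\<beta>*Q)^2) * (x1*w2 - x2*w1) + (x1^2+x2^2) * (x1*(-(\<beta>^2)*Q) - x2*(-(\<alpha>^2)*P)) = 0"
      apply (rule key[where ea="E1 \<alpha> v" and eb="E2 \<beta> v" and fa="F1 \<alpha> v" and fb="F2 \<beta> v"])
      using zu[OF u, of v] zv[of u v] zuu[OF u, of v] zvv[of u v] G Ee Dp Ep
      by (simp_all add: x1_def x2_def w1_def w2_def P_def Q_def orth)
    also have "\<dots> \<longleftrightarrow> Den * (deriv A u * deriv (deriv B) u - deriv (deriv A) u * deriv B u) + E * Num = 0"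
      unfolding G Ee W N ..
    also have "\<dots> \<longleftrightarrow> (deriv (deriv A) u * deriv B u - deriv A u * deriv (deriv B) u) / E = Num / Den"
      using Dp Ep by (auto simp add: frac_eq_eq algebra_simps)
    finally show ?thesis unfolding E_def Num_def Den_def .
  qed
  have ptv: "(\<forall>v\<in>{0..<2*pi}. mean_curvature_vector z (u,v) = 0) \<longleftrightarrow>
      (deriv (deriv A) u * deriv B u - deriv A u * deriv (deriv B) u)
        / ((deriv A u)\<^sup>2 + (deriv B u)\<^sup>2)
      = ((kap a b \<alpha> \<beta> * A u - 1) * kap a b \<alpha> \<beta> * deriv B u
          + (tau a b \<alpha> \<beta> * A u - sig a b \<alpha> \<beta> * B u)
            * (sig a b \<alpha> \<beta> * deriv A u + tau a b \<alpha> \<beta> * deriv B u))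
        / ((kap a b \<alpha> \<beta> * A u - 1)\<^sup>2 + (tau a b \<alpha> \<beta> * A u - sig a b \<alpha> \<beta> * B u)\<^sup>2)"
    if u: "u \<in> J" for u
  proof -
    have "(0::real) \<in> {0..<2*pi}" using pi_gt_zero by simp
    thus ?thesis using pt[OF u] by blast
  qed
  have "minimal_on z (J \<times> {0..<2 * pi}) \<longleftrightarrow> (\<forall>u\<in>J. \<forall>v\<in>{0..<2*pi}. mean_curvature_vector z (u,v) = 0)"
    by (auto simp: minimal_on_def)
  thus ?thesis using ptv unfolding z_def by simp
qed

end
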